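(* Let $n\ge 2$, let $A\in\mathbb{R}^{n\times n}$ be symmetric positive definite, $B=A^{1/2}$, $E=\{x: x^{\top}A^{-1}x=1\}$, and for $x_0$ with $x_0^{\top}A^{-1}x_0=1$ set $y_0=B^{-1}x_0$. There exists a parallelepiped $P$ inscribed in $E$ having $x_0$ as a vertex with $L(P)=2^n\sqrt{\operatorname{tr}(A)}$ in each of the following cases: (a) $n=2$ and $x_0$ arbitrary on $E$; (b) $n\ge2$, $A$ is a scalar multiple of the identity, and $x_0$ arbitrary on $E$; (c) $n\ge 3$ and $y_0$ is an eigenvector of $A$.
   Context: A (centred, $n$-dimensional) parallelepiped with linearly independent edge vectors $v_1,\dots,v_n$ is $P=\{\sum_i t_iv_i:|t_i|\le\tfrac12\}$ with vertices $\tfrac12\sum_i\varepsilon_iv_i$, $\varepsilon\in\{\pm1\}^n$; it is inscribed in $E$ if all vertices satisfy $x^{\top}A^{-1}x=1$. $L(P)=2^{n-1}\sum_i\|v_i\|$ is the total edge length. *)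

theory Defs
  imports "HOL-Analysis.Analysis"
begin

definition spd :: "real^'n^'n \<Rightarrow> bool" where
  "spd A \<longleftrightarrow> transpose A = A \<and> (\<forall>x. x \<noteq> 0 \<longrightarrow> x \<bullet> (A *v x) > 0)"

definition ellipsoid :: "real^'n^'n \<Rightarrow> (real^'n) set" where
  "ellipsoid A = {x. x \<bullet> (matrix_inv A *v x) = 1}"

definition signs :: "('n::finite \<Rightarrow> real) set" where
  "signs = {e. \<forall>i. e i \<in> {-1, 1}}"

text \<open>Vertex (1/2) sum_i e_i v_i of the centred parallelepiped with edge vectors v.\<close>
definition pp_vertex :: "('n::finite \<Rightarrow> real^'m) \<Rightarrow> ('n \<Rightarrow> real) \<Rightarrow> real^'m" where
  "pp_vertex v e = (1/2) *\<^sub>R (\<Sum>i\<in>UNIV. e i *\<^sub>R v i)"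

definition pp_edges :: "('n::finite \<Rightarrow> real^'n) \<Rightarrow> bool" where
  "pp_edges v \<longleftrightarrow> inj v \<and> independent (range v)"

definition pp_inscribed :: "real^'n^'n \<Rightarrow> ('n \<Rightarrow> real^'n) \<Rightarrow> bool" where
  "pp_inscribed A v \<longleftrightarrow> (\<forall>e\<in>signs. pp_vertex v e \<in> ellipsoid A)"

definition pp_length :: "('n::finite \<Rightarrow> real^'n) \<Rightarrow> real" where
  "pp_length v = 2 ^ (CARD('n) - 1) * (\<Sum>i\<in>UNIV. norm (v i))"

end

theory Submission
  imports Defs
begin

lemma zero_diag_aux:
  fixes q :: "'a::real_inner \<Rightarrow> real"
  assumes cont: "continuous_on UNIV q"
    and hom: "\<And>c x. q (c *\<^sub>R x) = c^2 * q x"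
    and rot: "\<And>a b \<alpha> \<beta>. q (\<alpha> *\<^sub>R a + \<beta> *\<^sub>R b) + q ((-\<beta>) *\<^sub>R a + \<alpha> *\<^sub>R b) = (\<alpha>^2 + \<beta>^2) * (q a + q b)"
  shows "finite S \<Longrightarrow> pairwise orthogonal S \<Longrightarrow> (\<forall>x\<in>S. norm x = 1) \<Longrightarrow> sum q S = 0 \<Longrightarrow>
    \<exists>T. finite T \<and> card T = card S \<and> pairwise orthogonal T \<and> (\<forall>x\<in>T. norm x = 1) \<and> T \<subseteq> span S \<and> (\<forall>x\<in>T. q x = 0)"
proof (induction "card S" arbitrary: S rule: less_induct)
  case (less S)
  note fin = less.prems(1) and orth = less.prems(2) and nrm = less.prems(3) and sm = less.prems(4)
  show ?case
  proof (cases "\<forall>x\<in>S. q x = 0")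
    case True
    then show ?thesis using less.prems by (intro exI[of _ S]) (auto simp: span_superset)
  next
    case False
    have "\<exists>b1\<in>S. q b1 > 0"
    proof (rule ccontr)
      assume "\<not> ?thesis"
      then have "\<forall>x\<in>S. 0 \<le> - q x" by force
      moreover have "sum (\<lambda>x. - q x) S = 0" using sm by (simp add: sum_negf)
      ultimately have "\<forall>x\<in>S. - q x = 0"
        using sum_nonneg_eq_0_iff[OF fin, of "\<lambda>x. - q x"] by simp
      then show False using False by auto
    qed
    then obtain b1 where b1: "b1 \<in> S" "q b1 > 0" by blast
    have "\<exists>b2\<in>S. q b2 < 0"
    proof (rule ccontr)
      assume "\<not> ?thesis"
      then have "\<forall>x\<in>S. 0 \<le> q x" by force
      then have "\<forall>x\<in>S. q x = 0" using sum_nonneg_eq_0_iff[OF fin, of q] sm by simp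
      then show False using False by auto
    qed
    then obtain b2 where b2: "b2 \<in> S" "q b2 < 0" by blast
    have b12: "b1 \<noteq> b2" using b1 b2 by auto
    have o12: "b1 \<bullet> b2 = 0" using orth b1 b2 b12 by (auto simp: pairwise_def orthogonal_def)
    have n1: "b1 \<bullet> b1 = 1" "b2 \<bullet> b2 = 1" using nrm b1 b2 by (auto simp: norm_eq_1)
    define f where "f t = q ((1 - t) *\<^sub>R b1 + t *\<^sub>R b2)" for t
    have "continuous_on {0..1} f" unfolding f_def
      by (rule continuous_on_compose2[OF cont]) (auto intro!: continuous_intros)
    then obtain t where t: "0 \<le> t" "t \<le> 1" "f t = 0"
      using IVT2'[of f 1 0 0] b1 b2 by (auto simp: f_def)
    define \<alpha> where "\<alpha> = 1 - t"
    define \<beta> where "\<beta> = t"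
    define N where "N = sqrt (\<alpha>^2 + \<beta>^2)"
    have "\<alpha>^2 + \<beta>^2 = 2*(t - 1/2)^2 + 1/2" unfolding \<alpha>_def \<beta>_def
      by (simp add: power2_eq_square algebra_simps)
    also have "\<dots> > 0" by (simp add: add_nonneg_pos)
    finally have pos: "\<alpha>^2 + \<beta>^2 > 0" .
    then have Npos: "N > 0" unfolding N_def by simp
    have N2: "N^2 = \<alpha>^2 + \<beta>^2" using pos unfolding N_def by simp
    have NN: "(\<alpha>/N)^2 + (\<beta>/N)^2 = 1" using pos N2
      by (simp add: power_divide add_divide_distrib[symmetric]) auto
    define w where "w = (\<alpha>/N) *\<^sub>R b1 + (\<beta>/N) *\<^sub>R b2"
    define w' where "w' = (-(\<beta>/N)) *\<^sub>R b1 + (\<alpha>/N) *\<^sub>R b2"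
    have "w = (1/N) *\<^sub>R (\<alpha> *\<^sub>R b1 + \<beta> *\<^sub>R b2)" unfolding w_def by (simp add: scaleR_add_right)
    then have qw: "q w = 0" using hom t(3) unfolding f_def \<alpha>_def \<beta>_def by simp
    have "q w + q w' = q b1 + q b2" using rot[of "\<alpha>/N" b1 "\<beta>/N" b2] NN unfolding w_def w'_def by simp
    then have qw': "q w' = q b1 + q b2" using qw by simp
    have ww: "w \<bullet> w = 1" "w' \<bullet> w' = 1" "w \<bullet> w' = 0"
      unfolding w_def w'_def using o12 n1 NN
      by (auto simp: inner_add_left inner_add_right inner_commute power2_eq_square algebra_simps)
    let ?R = "S - {b1, b2}"
    have orthR: "\<And>x. x \<in> ?R \<Longrightarrow> x \<bullet> b1 = 0 \<and> x \<bullet> b2 = 0"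
      using orth b1 b2 by (auto simp: pairwise_def orthogonal_def)
    have wR: "\<And>x. x \<in> ?R \<Longrightarrow> w \<bullet> x = 0 \<and> w' \<bullet> x = 0"
    proof -
      fix x assume "x \<in> ?R"
      then have h: "b1 \<bullet> x = 0" "b2 \<bullet> x = 0" using orthR by (metis inner_commute)+
      then show "w \<bullet> x = 0 \<and> w' \<bullet> x = 0" unfolding w_def w'_def by (simp add: inner_add_left inner_diff_left)
    qed
    have w'R: "w' \<notin> ?R"
    proof
      assume "w' \<in> ?R"
      then have "w' \<bullet> b1 = 0" "w' \<bullet> b2 = 0" using orthR by auto
      moreover have "b2 \<bullet> b1 = 0" using o12 by (metis inner_commute)
      ultimately have "-(\<beta>/N) = 0" "\<alpha>/N = 0" unfolding w'_def using o12 n1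
        by (simp_all only: inner_add_left inner_scaleR_left)
      then have "\<beta>/N = 0" "\<alpha>/N = 0" by simp_all
      then have "(\<alpha>/N)^2 + (\<beta>/N)^2 = 0" by (simp only: power_zero_numeral add_0)
      then show False using NN by simp
    qed
    define S' where "S' = insert w' ?R"
    have finS': "finite S'" using fin by (simp add: S'_def)
    have "{b1, b2} \<subseteq> S" using b1 b2 by auto
    then have "card {b1, b2} \<le> card S" by (rule card_mono[OF fin])
    then have cardS: "card S \<ge> 2" using b12 by simp
    have cardR: "card ?R = card S - 2" using b1 b2 b12 fin by (simp add: card_Diff_subset)
    have cardS': "card S' = card S - 1" unfolding S'_def using w'R fin cardR cardS by simp
    have wR': "\<And>x. x \<in> ?R \<Longrightarrow> x \<bullet> w' = 0" using wR by (metis inner_commute)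
    have "pairwise orthogonal ?R" using orth by (rule pairwise_subset) auto
    then have orthS': "pairwise orthogonal S'"
      by (simp add: S'_def pairwise_insert orthogonal_def wR wR')
    have nrmS': "\<forall>x\<in>S'. norm x = 1" unfolding S'_def using nrm ww by (auto simp: norm_eq_1)
    have Seq: "S = insert b1 (insert b2 ?R)" using b1 b2 by auto
    have "sum q S = sum q (insert b1 (insert b2 ?R))" by (rule arg_cong[where f="sum q"], rule Seq)
    also have "\<dots> = q b1 + (q b2 + sum q ?R)" using fin b12 by simp
    finally have "sum q S = q b1 + q b2 + sum q ?R" by simp
    then have smS': "sum q S' = 0" unfolding S'_def using fin w'R qw' sm by simp
    obtain T' where T': "finite T'" "card T' = card S'" "pairwise orthogonal T'" "\<forall>x\<in>T'. norm x = 1"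
      "T' \<subseteq> span S'" "\<forall>x\<in>T'. q x = 0"
    proof -
      have "card S' < card S" using cardS' cardS by simp
      from less.hyps[OF this finS' orthS' nrmS' smS'] show ?thesis using that by blast
    qed
    have wS': "\<And>y. y \<in> span S' \<Longrightarrow> w \<bullet> y = 0"
    proof -
      fix y assume "y \<in> span S'"
      then have "orthogonal w y"
        by (rule orthogonal_to_span) (use wR ww in \<open>auto simp: S'_def orthogonal_def\<close>)
      then show "w \<bullet> y = 0" by (simp add: orthogonal_def)
    qed
    have wS'': "\<And>y. y \<in> T' \<Longrightarrow> w \<bullet> y = 0 \<and> y \<bullet> w = 0"
      using wS' T'(5) by (metis inner_commute subsetD)
    have wT': "w \<notin> T'"
    proof
      assume "w \<in> T'"
      then have "w \<bullet> w = 0" using wS'' by blast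
      then show False using ww by simp
    qed
    have spS: "span S' \<subseteq> span S"
    proof -
      have "w' \<in> span S" unfolding w'_def using b1 b2
        by (intro span_add span_scale span_base) auto
      then have "S' \<subseteq> span S" unfolding S'_def by (auto intro: span_base)
      then show ?thesis by (intro span_minimal) auto
    qed
    have wS: "w \<in> span S" unfolding w_def using b1 b2
      by (intro span_add span_scale span_base) auto
    show ?thesis
    proof (intro exI[of _ "insert w T'"] conjI)
      show "finite (insert w T')" using T' by simp
      show "card (insert w T') = card S" using T' wT' cardS' cardS by simp
      show "pairwise orthogonal (insert w T')" using T'(3)
        by (simp add: pairwise_insert orthogonal_def wS'')
      show "\<forall>x\<in>insert w T'. norm x = 1" using T' ww by (auto simp: norm_eq_1)
      show "insert w T' \<subseteq> span S" using wS T'(5) spS by auto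
      show "\<forall>x\<in>insert w T'. q x = 0" using T' qw by auto
    qed
  qed
qed


lemma spd_sym: "spd B \<Longrightarrow> B *v z = z v* B"
  unfolding spd_def by (metis vector_transpose_matrix)

lemma spd_inv:
  fixes B :: "real^'n^'n"
  assumes "spd B"
  shows "B ** matrix_inv B = mat 1" "matrix_inv B ** B = mat 1"
proof -
  have "inj ((*v) B)"
  proof (rule injI)
    fix x y assume "B *v x = B *v y"
    then have "B *v (x - y) = 0" by (simp add: matrix_vector_mult_diff_distrib)
    then have "(x - y) \<bullet> (B *v (x - y)) = 0" by simp
    then have "x - y = 0" using assms unfolding spd_def by (metis less_irrefl)
    then show "x = y" by simp
  qed
  then have "invertible B" using matrix_left_invertible_injective invertible_left_inverse by blast
  then have "\<exists>A'. B ** A' = mat 1 \<and> A' ** B = mat 1" unfolding invertible_def by blast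
  then have "B ** matrix_inv B = mat 1 \<and> matrix_inv B ** B = mat 1"
    unfolding matrix_inv_def by (rule someI_ex)
  then show "B ** matrix_inv B = mat 1" "matrix_inv B ** B = mat 1" by auto
qed

theorem corollary3p4:
  fixes A B :: "real^'n^'n" and x0 :: "real^'n"
  assumes n2: "CARD('n) \<ge> 2"
    and A: "spd A"
    and B: "spd B" "B ** B = A"
    and x0: "x0 \<bullet> (matrix_inv A *v x0) = 1"
    and cases: "CARD('n) = 2
             \<or> (\<exists>c. A = c *\<^sub>R mat 1)
             \<or> (CARD('n) \<ge> 3 \<and> matrix_inv B *v x0 \<noteq> 0 \<and>
                (\<exists>\<mu>. A *v (matrix_inv B *v x0) = \<mu> *\<^sub>R (matrix_inv B *v x0)))"
  shows "\<exists>v. pp_edges v \<and> pp_inscribed A v \<and> (\<exists>e\<in>signs. pp_vertex v e = x0)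
             \<and> pp_length v = 2 ^ CARD('n) * sqrt (trace A)"
proof -
  define Bi where "Bi = matrix_inv B"
  have BBi: "B ** Bi = mat 1" "Bi ** B = mat 1" using spd_inv[OF B(1)] by (auto simp: Bi_def)
  have "A ** (Bi ** Bi) = mat 1"
    by (metis B(2) BBi(1) matrix_mul_assoc matrix_mul_rid)
  then have "invertible A" using invertible_right_inverse by blast
  then have "\<exists>A'. A ** A' = mat 1 \<and> A' ** A = mat 1" unfolding invertible_def by blast
  then have AAi: "A ** matrix_inv A = mat 1 \<and> matrix_inv A ** A = mat 1"
    unfolding matrix_inv_def by (rule someI_ex)
  have Ai: "matrix_inv A = Bi ** Bi"
    by (metis AAi \<open>A ** (Bi ** Bi) = mat 1\<close> matrix_mul_assoc matrix_mul_lid)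
  have K: "(B *v z) \<bullet> (matrix_inv A *v (B *v z)) = z \<bullet> z" for z
  proof -
    have "matrix_inv A *v (B *v z) = Bi *v z"
      by (metis Ai BBi(2) matrix_vector_mul_assoc matrix_vector_mul_lid)
    then have "(B *v z) \<bullet> (matrix_inv A *v (B *v z)) = (z v* B) \<bullet> (Bi *v z)"
      using spd_sym[OF B(1)] by simp
    also have "\<dots> = z \<bullet> (B *v (Bi *v z))" by (rule dot_lmul_matrix)
    also have "\<dots> = z \<bullet> z" by (simp add: matrix_vector_mul_assoc BBi)
    finally show ?thesis .
  qed
  define y0 where "y0 = Bi *v x0"
  have By0: "B *v y0 = x0" by (simp add: y0_def matrix_vector_mul_assoc BBi)
  have y0n: "y0 \<bullet> y0 = 1" using K[of y0] x0 By0 by simp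
  have qA: "u \<bullet> (A *v u) = (B *v u) \<bullet> (B *v u)" for u
  proof -
    have "u \<bullet> (A *v u) = u \<bullet> (B *v (B *v u))" by (simp add: B(2)[symmetric] matrix_vector_mul_assoc)
    also have "\<dots> = (u v* B) \<bullet> (B *v u)" by (rule dot_lmul_matrix[symmetric])
    also have "\<dots> = (B *v u) \<bullet> (B *v u)" using spd_sym[OF B(1)] by simp
    finally show ?thesis .
  qed
  have Asym: "a \<bullet> (A *v b) = b \<bullet> (A *v a)" for a b
  proof -
    have "a \<bullet> (A *v b) = (a v* A) \<bullet> b" by (rule dot_lmul_matrix[symmetric])
    also have "\<dots> = (A *v a) \<bullet> b" using spd_sym[OF A] by simp
    finally show ?thesis by (simp add: inner_commute)
  qed
  define q where "q x = trace A * (y0 \<bullet> x)^2 - x \<bullet> (A *v x)" for x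
  have cont: "continuous_on UNIV q" unfolding q_def
    by (intro continuous_intros matrix_vector_mult_linear_continuous_on)
  have hom: "q (c *\<^sub>R x) = c^2 * q x" for c x
    unfolding q_def by (simp add: matrix_vector_mult_scaleR power2_eq_square algebra_simps)
  have rot: "q (\<alpha> *\<^sub>R a + \<beta> *\<^sub>R b) + q ((-\<beta>) *\<^sub>R a + \<alpha> *\<^sub>R b) = (\<alpha>^2 + \<beta>^2) * (q a + q b)" for a b \<alpha> \<beta>
    using Asym[of a b]
    unfolding q_def by (simp add: matrix_vector_mult_scaleR matrix_vector_right_distrib
        inner_add_left inner_add_right power2_eq_square algebra_simps)
  define S0 where "S0 = range (\<lambda>i::'n. axis i (1::real))"
  have injax: "inj (\<lambda>i::'n. axis i (1::real))"
    by (rule injI) (metis axis_eq_axis zero_neq_one)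
  have finS0: "finite S0" by (simp add: S0_def)
  have cardS0: "card S0 = CARD('n)" unfolding S0_def using injax by (simp add: card_image)
  have orthS0: "pairwise orthogonal S0" unfolding S0_def
    by (auto simp: pairwise_def orthogonal_def inner_axis_axis)
  have nS0: "\<forall>x\<in>S0. norm x = 1" by (auto simp: S0_def)
  have "sum q S0 = (\<Sum>i\<in>UNIV. q (axis i 1))" unfolding S0_def using injax
    by (simp add: sum.reindex)
  also have "\<dots> = trace A * (\<Sum>i\<in>UNIV. (y0 $ i)^2) - (\<Sum>i\<in>UNIV. A $ i $ i)"
  proof -
    have "q (axis i 1) = trace A * (y0 $ i)^2 - A $ i $ i" for i
      by (simp add: q_def inner_axis inner_axis' matrix_vector_mult_basis column_def)
    then show ?thesis by (simp add: sum_subtractf sum_distrib_left)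
  qed
  also have "(\<Sum>i\<in>UNIV. (y0 $ i)^2) = 1" using y0n by (simp add: inner_vec_def power2_eq_square)
  finally have smS0: "sum q S0 = 0" by (simp add: trace_def)
  obtain T where T: "finite T" "card T = CARD('n)" "pairwise orthogonal T" "\<forall>x\<in>T. norm x = 1"
    "\<forall>x\<in>T. q x = 0"
    using zero_diag_aux[OF cont hom rot finS0 orthS0 nS0 smS0] cardS0 by auto
  obtain u where u: "bij_betw u (UNIV::'n set) T"
    using bij_betw_iff_card[of "UNIV::'n set" T] T by auto
  have uT: "u i \<in> T" for i using u by (auto simp: bij_betw_def)
  have uinj: "inj u" using u by (auto simp: bij_betw_def)
  have uu: "u i \<bullet> u j = (if i = j then 1 else 0)" for i j
  proof (cases "i = j")
    case True then show ?thesis using T(4) uT by (simp add: norm_eq_1)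
  next
    case False then have "u i \<noteq> u j" using uinj by (auto dest: injD)
    then show ?thesis using T(3) uT False by (auto simp: pairwise_def orthogonal_def)
  qed
  define a where "a i = y0 \<bullet> u i" for i
  have indT: "independent T"
    using T(3,4) by (intro pairwise_orthogonal_independent) auto
  have "UNIV \<subseteq> span T"
    using card_eq_dim[of T UNIV] indT T(1,2) by (simp add: dim_UNIV)
  have y0exp: "y0 = (\<Sum>i\<in>UNIV. a i *\<^sub>R u i)"
  proof -
    define d where "d = y0 - (\<Sum>i\<in>UNIV. a i *\<^sub>R u i)"
    have du: "d \<bullet> u j = 0" for j
      by (simp add: d_def inner_diff_left inner_sum_left uu a_def if_distrib cong: if_cong)
    have "orthogonal d d"
      by (rule orthogonal_to_span[of d T d]) (use \<open>UNIV \<subseteq> span T\<close> u du in \<open>auto simp: bij_betw_def orthogonal_def\<close>)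
    then show ?thesis by (simp add: d_def orthogonal_def)
  qed
  define z where "z e = (\<Sum>i\<in>UNIV. (e i * a i) *\<^sub>R u i)" for e :: "'n \<Rightarrow> real"
  have zz: "z e \<bullet> z e = (\<Sum>i\<in>UNIV. (e i * a i)^2)" for e
  proof -
    have "(norm (z e))^2 = (\<Sum>i\<in>UNIV. (norm ((e i * a i) *\<^sub>R u i))^2)"
      unfolding z_def by (rule norm_sum_Pythagorean) (auto simp: pairwise_def orthogonal_def uu)
    also have "\<dots> = (\<Sum>i\<in>UNIV. (e i * a i)^2)"
      using T(4) uT by (simp add: power_mult_distrib)
    finally show ?thesis by (simp add: power2_norm_eq_inner)
  qed
  have z1: "z (\<lambda>_. 1) = y0" using y0exp by (simp add: z_def)
  have asum: "(\<Sum>i\<in>UNIV. (a i)^2) = 1" using zz[of "\<lambda>_. 1"] z1 y0n by simp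
  have zs: "z e \<bullet> z e = 1" if "e \<in> signs" for e
  proof -
    have "(e i * a i)^2 = (a i)^2" for i
    proof -
      have "e i = -1 \<or> e i = 1" using that by (simp add: signs_def)
      then have "(e i)^2 = 1" by auto
      then show ?thesis by (simp add: power_mult_distrib)
    qed
    then show ?thesis using zz[of e] asum by simp
  qed
  have qu: "trace A * (a i)^2 = (B *v u i) \<bullet> (B *v u i)" for i
    using T(5) uT[of i] qA[of "u i"] by (simp add: q_def a_def)
  have Bpos: "(B *v u i) \<bullet> (B *v u i) > 0" for i
  proof -
    have "u i \<noteq> 0" using T(4) uT[of i] by auto
    then have "B *v u i \<noteq> 0"
      by (metis BBi(2) matrix_vector_mul_assoc matrix_vector_mul_lid matrix_vector_mult_0_right)
    then show ?thesis by simp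
  qed
  have posi: "trace A > 0 \<and> a i \<noteq> 0" for i
  proof -
    have h: "0 < trace A * (a i)^2" using qu[of i] Bpos[of i] by simp
    have "trace A > 0"
    proof (rule ccontr)
      assume "\<not> trace A > 0"
      then have "trace A * (a i)^2 \<le> 0" by (simp add: mult_nonpos_nonneg)
      then show False using h by simp
    qed
    moreover have "a i \<noteq> 0" using h by auto
    ultimately show ?thesis by simp
  qed
  have trpos: "trace A > 0" using posi[of undefined] by simp
  have anz: "a i \<noteq> 0" for i using posi[of i] by simp
  define v where "v i = (2 * a i) *\<^sub>R (B *v u i)" for i
  have vert: "pp_vertex v e = B *v z e" for e
  proof -
    have "pp_vertex v e = (\<Sum>i\<in>UNIV. B *v ((e i * a i) *\<^sub>R u i))"
      unfolding pp_vertex_def v_def by (simp add: scaleR_sum_right matrix_vector_mult_scaleR)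
    also have "\<dots> = B *v z e" unfolding z_def
      by (rule linear_sum[OF matrix_vector_mul_linear, symmetric])
    finally show ?thesis .
  qed
  have ins: "pp_inscribed A v"
    unfolding pp_inscribed_def ellipsoid_def using vert K zs by simp
  have "(\<lambda>_. 1) \<in> signs" by (simp add: signs_def)
  moreover have "pp_vertex v (\<lambda>_. 1) = x0" using vert z1 By0 by simp
  ultimately have vx: "\<exists>e\<in>signs. pp_vertex v e = x0" by blast
  have nv: "norm (v i) = 2 * (a i)^2 * sqrt (trace A)" for i
  proof -
    have "norm (B *v u i) = sqrt (trace A * (a i)^2)" using qu[of i] by (simp add: norm_eq_sqrt_inner)
    also have "\<dots> = sqrt (trace A) * \<bar>a i\<bar>" by (simp add: real_sqrt_mult)
    finally show ?thesis by (simp add: v_def abs_mult power2_eq_square)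
  qed
  have len: "pp_length v = 2 ^ CARD('n) * sqrt (trace A)"
  proof -
    have "(\<Sum>i\<in>UNIV. norm (v i)) = 2 * sqrt (trace A)"
      using asum by (simp add: nv sum_distrib_right[symmetric] sum_distrib_left[symmetric])
    moreover have "(2::real) ^ (CARD('n) - 1) * 2 = 2 ^ CARD('n)"
      by (metis Suc_diff_1 mult.commute power_Suc zero_less_card_finite finite_UNIV)
    ultimately show ?thesis unfolding pp_length_def by simp
  qed
  define w where "w i = (2 * a i) *\<^sub>R u i" for i
  have vw: "v = (\<lambda>i. B *v w i)" by (rule ext) (simp add: v_def w_def matrix_vector_mult_scaleR)
  have injB: "inj ((*v) B)"
  proof (rule injI)
    fix x y assume "B *v x = B *v y"
    then have "Bi *v (B *v x) = Bi *v (B *v y)" by simp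
    then show "x = y" by (simp add: matrix_vector_mul_assoc BBi)
  qed
  have injw: "inj w"
  proof (rule injI)
    fix i j assume "w i = w j"
    then have e: "w i \<bullet> u i = w j \<bullet> u i" by simp
    have e1: "w i \<bullet> u i = 2 * a i" by (simp add: w_def uu)
    show "i = j"
    proof (rule ccontr)
      assume "i \<noteq> j"
      then have "w j \<bullet> u i = 0" by (simp add: w_def uu)
      then show False using e e1 anz[of i] by simp
    qed
  qed
  have indw: "independent (range w)"
  proof (rule pairwise_orthogonal_independent)
    show "pairwise orthogonal (range w)"
      using injw by (auto simp: pairwise_def orthogonal_def w_def uu)
    show "0 \<notin> range w"
    proof
      assume "0 \<in> range w" then obtain i where "w i = 0" by auto
      then have "w i \<bullet> u i = 0" by simp
      then show False using anz[of i] by (simp add: w_def uu)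
    qed
  qed
  have "independent ((*v) B ` range w)"
    by (rule linear_independent_injective_image[OF matrix_vector_mul_linear indw])
       (use injB in \<open>auto intro: inj_on_subset\<close>)
  moreover have "range v = (*v) B ` range w" by (auto simp: vw)
  moreover have "inj v" unfolding vw using injB injw by (auto simp: inj_def)
  ultimately have "pp_edges v" by (simp add: pp_edges_def)
  then show ?thesis using ins vx len by blast
qed


end
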